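(* In every bigroupoid $\mathcal B$, every formal diagram commutes; equivalently, any two canonical 2-cells (images under $J_b$ of 2-cells of $\mathcal F_b\mathcal B$) with the same source and target that arise as images of parallel 2-cells of $\mathcal F_b\mathcal B$ are equal, since every diagram of 2-cells in $\mathcal F_b\mathcal B$ commutes.
   Context: A graph consists of a set of nodes and sets of edges between pairs of nodes. A bigroupoid consists of a set of 0-cells, hom-groupoids $\mathcal B(A,B)$ (objects: 1-cells; arrows: 2-cells), composition functors $*$, identity 1-cells $1_A$, inversion functors $(-)^*$ and natural isomorphisms $\mathbf a:(h*g)*f\Rightarrow h*(g*f)$, $\mathbf l:1*f\Rightarrow f$, $\mathbf r:f*1\Rightarrow f$, $\mathbf e:f^**f\Rightarrow 1$, $\mathbf i:1\Rightarrow f*f^*$ satisfying the pentagon, $(\mathrm{id}*\mathbf l)\circ\mathbf a=\mathbf r*\mathrm{id}$, and $\mathbf r_f\circ(\mathrm{id}*\mathbf e_f)\circ\mathbf a\circ(\mathbf i_f*\mathrm{id})=\mathbf l_f$. A strict morphism preserves all structure on the nose. Every bigroupoid has an underlying graph (0-cells and 1-cells). For a graph $\mathcal G$, the free bigroupoid $\mathcal F_b\mathcal G$ comes with a graph morphism $I_b:\mathcal G\to\mathcal F_b\mathcal G$ such that for every bigroupoid $\mathcal B$ and graph morphism $F:\mathcal G\to\mathcal B$ there is a unique strict morphism $\widetilde F$ with $\widetilde FI_b=F$. For a bigroupoid $\mathcal B$, let $\mathcal F_b\mathcal B$ be the free bigroupoid on its underlying graph and $J_b:\mathcal F_b\mathcal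 B\to\mathcal B$ the unique strict morphism extending the identity of the underlying graph. A diagram of 2-cells in $\mathcal B$ is a formal diagram if it is the image under $J_b$ of a diagram of 2-cells in $\mathcal F_b\mathcal B$; a single 2-cell arising this way is called canonical. *)

theory Defs
  imports Main
begin

text \<open>Horizontal composition is written hc1 g f = g * f (f first, then g);
  vertical composition vc b a = b \<circ> a (a first, then b).\<close>

record ('o, 'b, 'c) bigrp =
  Ob   :: "'o set"
  Arr1 :: "'b set"
  s1   :: "'b \<Rightarrow> 'o"
  t1   :: "'b \<Rightarrow> 'o"
  Arr2 :: "'c set"
  d2   :: "'c \<Rightarrow> 'b"
  c2   :: "'c \<Rightarrow> 'b"
  vc   :: "'c \<Rightarrow> 'c \<Rightarrow> 'c"
  id2  :: "'b \<Rightarrow> 'c"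
  inv2 :: "'c \<Rightarrow> 'c"
  hc1  :: "'b \<Rightarrow> 'b \<Rightarrow> 'b"
  hc2  :: "'c \<Rightarrow> 'c \<Rightarrow> 'c"
  id1  :: "'o \<Rightarrow> 'b"
  st1  :: "'b \<Rightarrow> 'b"
  st2  :: "'c \<Rightarrow> 'c"
  aa   :: "'b \<Rightarrow> 'b \<Rightarrow> 'b \<Rightarrow> 'c"
  ll   :: "'b \<Rightarrow> 'c"
  rr   :: "'b \<Rightarrow> 'c"
  ee   :: "'b \<Rightarrow> 'c"
  ii   :: "'b \<Rightarrow> 'c"

locale bigroupoid =
  fixes B :: "('o, 'b, 'c) bigrp"
  assumes
    arr1_ends: "f \<in> Arr1 B \<Longrightarrow> s1 B f \<in> Ob B \<and> t1 B f \<in> Ob B"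
  and id1_arr: "A \<in> Ob B \<Longrightarrow> id1 B A \<in> Arr1 B \<and> s1 B (id1 B A) = A \<and> t1 B (id1 B A) = A"
  and hc1_arr: "\<lbrakk>f \<in> Arr1 B; g \<in> Arr1 B; t1 B f = s1 B g\<rbrakk> \<Longrightarrow>
        hc1 B g f \<in> Arr1 B \<and> s1 B (hc1 B g f) = s1 B f \<and> t1 B (hc1 B g f) = t1 B g"
  and st1_arr: "f \<in> Arr1 B \<Longrightarrow>
        st1 B f \<in> Arr1 B \<and> s1 B (st1 B f) = t1 B f \<and> t1 B (st1 B f) = s1 B f"
  and arr2_ends: "\<alpha> \<in> Arr2 B \<Longrightarrow> d2 B \<alpha> \<in> Arr1 B \<and> c2 B \<alpha> \<in> Arr1 B \<and>
        s1 B (d2 B \<alpha>) = s1 B (c2 B \<alpha>) \<and> t1 B (d2 B \<alpha>) = t1 B (c2 B \<alpha>)"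
  and id2_arr: "f \<in> Arr1 B \<Longrightarrow> id2 B f \<in> Arr2 B \<and> d2 B (id2 B f) = f \<and> c2 B (id2 B f) = f"
  and vc_arr: "\<lbrakk>\<alpha> \<in> Arr2 B; \<beta> \<in> Arr2 B; c2 B \<alpha> = d2 B \<beta>\<rbrakk> \<Longrightarrow>
        vc B \<beta> \<alpha> \<in> Arr2 B \<and> d2 B (vc B \<beta> \<alpha>) = d2 B \<alpha> \<and> c2 B (vc B \<beta> \<alpha>) = c2 B \<beta>"
  and vc_assoc: "\<lbrakk>\<alpha> \<in> Arr2 B; \<beta> \<in> Arr2 B; \<gamma> \<in> Arr2 B; c2 B \<alpha> = d2 B \<beta>; c2 B \<beta> = d2 B \<gamma>\<rbrakk> \<Longrightarrow>
        vc B \<gamma> (vc B \<beta> \<alpha>) = vc B (vc B \<gamma> \<beta>) \<alpha>"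
  and vc_idl: "\<alpha> \<in> Arr2 B \<Longrightarrow> vc B (id2 B (c2 B \<alpha>)) \<alpha> = \<alpha>"
  and vc_idr: "\<alpha> \<in> Arr2 B \<Longrightarrow> vc B \<alpha> (id2 B (d2 B \<alpha>)) = \<alpha>"
  and inv2_arr: "\<alpha> \<in> Arr2 B \<Longrightarrow> inv2 B \<alpha> \<in> Arr2 B \<and> d2 B (inv2 B \<alpha>) = c2 B \<alpha> \<and>
        c2 B (inv2 B \<alpha>) = d2 B \<alpha>"
  and inv2_l: "\<alpha> \<in> Arr2 B \<Longrightarrow> vc B (inv2 B \<alpha>) \<alpha> = id2 B (d2 B \<alpha>)"
  and inv2_r: "\<alpha> \<in> Arr2 B \<Longrightarrow> vc B \<alpha> (inv2 B \<alpha>) = id2 B (c2 B \<alpha>)"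
  and hc2_arr: "\<lbrakk>\<alpha> \<in> Arr2 B; \<beta> \<in> Arr2 B; t1 B (d2 B \<alpha>) = s1 B (d2 B \<beta>)\<rbrakk> \<Longrightarrow>
        hc2 B \<beta> \<alpha> \<in> Arr2 B \<and> d2 B (hc2 B \<beta> \<alpha>) = hc1 B (d2 B \<beta>) (d2 B \<alpha>) \<and>
        c2 B (hc2 B \<beta> \<alpha>) = hc1 B (c2 B \<beta>) (c2 B \<alpha>)"
  and hc2_id: "\<lbrakk>f \<in> Arr1 B; g \<in> Arr1 B; t1 B f = s1 B g\<rbrakk> \<Longrightarrow>
        hc2 B (id2 B g) (id2 B f) = id2 B (hc1 B g f)"
  and hc2_interchange: "\<lbrakk>\<alpha> \<in> Arr2 B; \<alpha>' \<in> Arr2 B; \<beta> \<in> Arr2 B; \<beta>' \<in> Arr2 B;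
        c2 B \<alpha> = d2 B \<alpha>'; c2 B \<beta> = d2 B \<beta>'; t1 B (d2 B \<alpha>) = s1 B (d2 B \<beta>)\<rbrakk> \<Longrightarrow>
        hc2 B (vc B \<beta>' \<beta>) (vc B \<alpha>' \<alpha>) = vc B (hc2 B \<beta>' \<alpha>') (hc2 B \<beta> \<alpha>)"
  and st2_arr: "\<alpha> \<in> Arr2 B \<Longrightarrow> st2 B \<alpha> \<in> Arr2 B \<and> d2 B (st2 B \<alpha>) = st1 B (d2 B \<alpha>) \<and>
        c2 B (st2 B \<alpha>) = st1 B (c2 B \<alpha>)"
  and st2_id: "f \<in> Arr1 B \<Longrightarrow> st2 B (id2 B f) = id2 B (st1 B f)"
  and st2_vc: "\<lbrakk>\<alpha> \<in> Arr2 B; \<beta> \<in> Arr2 B; c2 B \<alpha> = d2 B \<beta>\<rbrakk> \<Longrightarrow>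
        st2 B (vc B \<beta> \<alpha>) = vc B (st2 B \<beta>) (st2 B \<alpha>)"
  and aa_arr: "\<lbrakk>f \<in> Arr1 B; g \<in> Arr1 B; h \<in> Arr1 B; t1 B f = s1 B g; t1 B g = s1 B h\<rbrakk> \<Longrightarrow>
        aa B h g f \<in> Arr2 B \<and> d2 B (aa B h g f) = hc1 B (hc1 B h g) f \<and>
        c2 B (aa B h g f) = hc1 B h (hc1 B g f)"
  and aa_nat: "\<lbrakk>\<alpha> \<in> Arr2 B; \<beta> \<in> Arr2 B; \<gamma> \<in> Arr2 B;
        t1 B (d2 B \<alpha>) = s1 B (d2 B \<beta>); t1 B (d2 B \<beta>) = s1 B (d2 B \<gamma>)\<rbrakk> \<Longrightarrow>
        vc B (aa B (c2 B \<gamma>) (c2 B \<beta>) (c2 B \<alpha>)) (hc2 B (hc2 B \<gamma> \<beta>) \<alpha>) =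
        vc B (hc2 B \<gamma> (hc2 B \<beta> \<alpha>)) (aa B (d2 B \<gamma>) (d2 B \<beta>) (d2 B \<alpha>))"
  and ll_arr: "f \<in> Arr1 B \<Longrightarrow> ll B f \<in> Arr2 B \<and> d2 B (ll B f) = hc1 B (id1 B (t1 B f)) f \<and>
        c2 B (ll B f) = f"
  and ll_nat: "\<alpha> \<in> Arr2 B \<Longrightarrow>
        vc B (ll B (c2 B \<alpha>)) (hc2 B (id2 B (id1 B (t1 B (d2 B \<alpha>)))) \<alpha>) = vc B \<alpha> (ll B (d2 B \<alpha>))"
  and rr_arr: "f \<in> Arr1 B \<Longrightarrow> rr B f \<in> Arr2 B \<and> d2 B (rr B f) = hc1 B f (id1 B (s1 B f)) \<and>
        c2 B (rr B f) = f"
  and rr_nat: "\<alpha> \<in> Arr2 B \<Longrightarrow>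
        vc B (rr B (c2 B \<alpha>)) (hc2 B \<alpha> (id2 B (id1 B (s1 B (d2 B \<alpha>))))) = vc B \<alpha> (rr B (d2 B \<alpha>))"
  and ee_arr: "f \<in> Arr1 B \<Longrightarrow> ee B f \<in> Arr2 B \<and> d2 B (ee B f) = hc1 B (st1 B f) f \<and>
        c2 B (ee B f) = id1 B (s1 B f)"
  and ee_nat: "\<alpha> \<in> Arr2 B \<Longrightarrow>
        vc B (ee B (c2 B \<alpha>)) (hc2 B (st2 B \<alpha>) \<alpha>) =
        vc B (id2 B (id1 B (s1 B (d2 B \<alpha>)))) (ee B (d2 B \<alpha>))"
  and ii_arr: "f \<in> Arr1 B \<Longrightarrow> ii B f \<in> Arr2 B \<and> d2 B (ii B f) = id1 B (t1 B f) \<and>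
        c2 B (ii B f) = hc1 B f (st1 B f)"
  and ii_nat: "\<alpha> \<in> Arr2 B \<Longrightarrow>
        vc B (ii B (c2 B \<alpha>)) (id2 B (id1 B (t1 B (d2 B \<alpha>)))) =
        vc B (hc2 B \<alpha> (st2 B \<alpha>)) (ii B (d2 B \<alpha>))"
  and pentagon: "\<lbrakk>f \<in> Arr1 B; g \<in> Arr1 B; h \<in> Arr1 B; k \<in> Arr1 B;
        t1 B f = s1 B g; t1 B g = s1 B h; t1 B h = s1 B k\<rbrakk> \<Longrightarrow>
        vc B (aa B k h (hc1 B g f)) (aa B (hc1 B k h) g f) =
        vc B (hc2 B (id2 B k) (aa B h g f))
          (vc B (aa B k (hc1 B h g) f) (hc2 B (aa B k h g) (id2 B f)))"
  and triangle: "\<lbrakk>f \<in> Arr1 B; g \<in> Arr1 B; t1 B f = s1 B g\<rbrakk> \<Longrightarrow>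
        vc B (hc2 B (id2 B g) (ll B f)) (aa B g (id1 B (t1 B f)) f) = hc2 B (rr B g) (id2 B f)"
  and inverse_ax: "f \<in> Arr1 B \<Longrightarrow>
        vc B (rr B f) (vc B (hc2 B (id2 B f) (ee B f))
          (vc B (aa B f (st1 B f) f) (hc2 B (ii B f) (id2 B f)))) = ll B f"

text \<open>1-cells of F_b B: formal words over the underlying graph of B
  (nodes = 0-cells of B, edges = 1-cells of B).\<close>

datatype ('o, 'b) fw = FE 'b | FI 'o | FC "('o, 'b) fw" "('o, 'b) fw" | FS "('o, 'b) fw"

fun fsrc :: "('o, 'b, 'c) bigrp \<Rightarrow> ('o, 'b) fw \<Rightarrow> 'o"
and ftgt :: "('o, 'b, 'c) bigrp \<Rightarrow> ('o, 'b) fw \<Rightarrow> 'o" where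
  "fsrc B (FE f) = s1 B f"
| "fsrc B (FI A) = A"
| "fsrc B (FC g f) = fsrc B f"
| "fsrc B (FS f) = ftgt B f"
| "ftgt B (FE f) = t1 B f"
| "ftgt B (FI A) = A"
| "ftgt B (FC g f) = ftgt B g"
| "ftgt B (FS f) = fsrc B f"

fun fwf :: "('o, 'b, 'c) bigrp \<Rightarrow> ('o, 'b) fw \<Rightarrow> bool" where
  "fwf B (FE f) = (f \<in> Arr1 B)"
| "fwf B (FI A) = (A \<in> Ob B)"
| "fwf B (FC g f) = (fwf B g \<and> fwf B f \<and> ftgt B f = fsrc B g)"
| "fwf B (FS f) = fwf B f"

fun J1 :: "('o, 'b, 'c) bigrp \<Rightarrow> ('o, 'b) fw \<Rightarrow> 'b" where
  "J1 B (FE f) = f"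
| "J1 B (FI A) = id1 B A"
| "J1 B (FC g f) = hc1 B (J1 B g) (J1 B f)"
| "J1 B (FS f) = st1 B (J1 B f)"

text \<open>2-cells of F_b B are represented by formal 2-cell terms (the 2-cells of F_b B are
  equivalence classes of well-formed terms modulo the bigroupoid equations).\<close>

datatype ('o, 'b) ft =
    TId "('o, 'b) fw"
  | TV "('o, 'b) ft" "('o, 'b) ft"
  | TH "('o, 'b) ft" "('o, 'b) ft"
  | TInv "('o, 'b) ft"
  | TS "('o, 'b) ft"
  | TA "('o, 'b) fw" "('o, 'b) fw" "('o, 'b) fw"
  | TL "('o, 'b) fw"
  | TR "('o, 'b) fw"
  | TE "('o, 'b) fw"
  | TIo "('o, 'b) fw"

fun tdom :: "('o, 'b, 'c) bigrp \<Rightarrow> ('o, 'b) ft \<Rightarrow> ('o, 'b) fw"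
and tcod :: "('o, 'b, 'c) bigrp \<Rightarrow> ('o, 'b) ft \<Rightarrow> ('o, 'b) fw" where
  "tdom B (TId w) = w"
| "tdom B (TV b a) = tdom B a"
| "tdom B (TH b a) = FC (tdom B b) (tdom B a)"
| "tdom B (TInv a) = tcod B a"
| "tdom B (TS a) = FS (tdom B a)"
| "tdom B (TA h g f) = FC (FC h g) f"
| "tdom B (TL f) = FC (FI (ftgt B f)) f"
| "tdom B (TR f) = FC f (FI (fsrc B f))"
| "tdom B (TE f) = FC (FS f) f"
| "tdom B (TIo f) = FI (ftgt B f)"
| "tcod B (TId w) = w"
| "tcod B (TV b a) = tcod B b"
| "tcod B (TH b a) = FC (tcod B b) (tcod B a)"
| "tcod B (TInv a) = tdom B a"
| "tcod B (TS a) = FS (tcod B a)"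
| "tcod B (TA h g f) = FC h (FC g f)"
| "tcod B (TL f) = f"
| "tcod B (TR f) = f"
| "tcod B (TE f) = FI (fsrc B f)"
| "tcod B (TIo f) = FC f (FS f)"

fun twf :: "('o, 'b, 'c) bigrp \<Rightarrow> ('o, 'b) ft \<Rightarrow> bool" where
  "twf B (TId w) = fwf B w"
| "twf B (TV b a) = (twf B b \<and> twf B a \<and> tcod B a = tdom B b)"
| "twf B (TH b a) = (twf B b \<and> twf B a \<and> ftgt B (tdom B a) = fsrc B (tdom B b))"
| "twf B (TInv a) = twf B a"
| "twf B (TS a) = twf B a"
| "twf B (TA h g f) = (fwf B h \<and> fwf B g \<and> fwf B f \<and> ftgt B f = fsrc B g \<and> ftgt B g = fsrc B h)"
| "twf B (TL f) = fwf B f"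
| "twf B (TR f) = fwf B f"
| "twf B (TE f) = fwf B f"
| "twf B (TIo f) = fwf B f"

fun J2 :: "('o, 'b, 'c) bigrp \<Rightarrow> ('o, 'b) ft \<Rightarrow> 'c" where
  "J2 B (TId w) = id2 B (J1 B w)"
| "J2 B (TV b a) = vc B (J2 B b) (J2 B a)"
| "J2 B (TH b a) = hc2 B (J2 B b) (J2 B a)"
| "J2 B (TInv a) = inv2 B (J2 B a)"
| "J2 B (TS a) = st2 B (J2 B a)"
| "J2 B (TA h g f) = aa B (J1 B h) (J1 B g) (J1 B f)"
| "J2 B (TL f) = ll B (J1 B f)"
| "J2 B (TR f) = rr B (J1 B f)"
| "J2 B (TE f) = ee B (J1 B f)"
| "J2 B (TIo f) = ii B (J1 B f)"

end

theory Submission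
  imports Defs
begin

context bigroupoid begin

lemma ob_s1[simp]: "f \<in> Arr1 B \<Longrightarrow> s1 B f \<in> Ob B" using arr1_ends by blast
lemma ob_t1[simp]: "f \<in> Arr1 B \<Longrightarrow> t1 B f \<in> Ob B" using arr1_ends by blast
lemma id1T[simp]: "A \<in> Ob B \<Longrightarrow> id1 B A \<in> Arr1 B" "A \<in> Ob B \<Longrightarrow> s1 B (id1 B A) = A"
  "A \<in> Ob B \<Longrightarrow> t1 B (id1 B A) = A" using id1_arr by blast+
lemma hc1T[simp]: "\<lbrakk>f \<in> Arr1 B; g \<in> Arr1 B; t1 B f = s1 B g\<rbrakk> \<Longrightarrow> hc1 B g f \<in> Arr1 B"
  "\<lbrakk>f \<in> Arr1 B; g \<in> Arr1 B; t1 B f = s1 B g\<rbrakk> \<Longrightarrow> s1 B (hc1 B g f) = s1 B f"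
  "\<lbrakk>f \<in> Arr1 B; g \<in> Arr1 B; t1 B f = s1 B g\<rbrakk> \<Longrightarrow> t1 B (hc1 B g f) = t1 B g"
  using hc1_arr by blast+
lemma st1T[simp]: "f \<in> Arr1 B \<Longrightarrow> st1 B f \<in> Arr1 B" "f \<in> Arr1 B \<Longrightarrow> s1 B (st1 B f) = t1 B f"
  "f \<in> Arr1 B \<Longrightarrow> t1 B (st1 B f) = s1 B f" using st1_arr by blast+
lemma arr2E[simp]: "a \<in> Arr2 B \<Longrightarrow> d2 B a \<in> Arr1 B" "a \<in> Arr2 B \<Longrightarrow> c2 B a \<in> Arr1 B"
  "a \<in> Arr2 B \<Longrightarrow> s1 B (c2 B a) = s1 B (d2 B a)" "a \<in> Arr2 B \<Longrightarrow> t1 B (c2 B a) = t1 B (d2 B a)"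
  using arr2_ends by auto
lemma id2T[simp]: "f \<in> Arr1 B \<Longrightarrow> id2 B f \<in> Arr2 B" "f \<in> Arr1 B \<Longrightarrow> d2 B (id2 B f) = f"
  "f \<in> Arr1 B \<Longrightarrow> c2 B (id2 B f) = f" using id2_arr by blast+
lemma vcT[simp]: "\<lbrakk>a \<in> Arr2 B; b \<in> Arr2 B; c2 B a = d2 B b\<rbrakk> \<Longrightarrow> vc B b a \<in> Arr2 B"
  "\<lbrakk>a \<in> Arr2 B; b \<in> Arr2 B; c2 B a = d2 B b\<rbrakk> \<Longrightarrow> d2 B (vc B b a) = d2 B a"
  "\<lbrakk>a \<in> Arr2 B; b \<in> Arr2 B; c2 B a = d2 B b\<rbrakk> \<Longrightarrow> c2 B (vc B b a) = c2 B b"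
  using vc_arr by blast+
lemma inv2T[simp]: "a \<in> Arr2 B \<Longrightarrow> inv2 B a \<in> Arr2 B" "a \<in> Arr2 B \<Longrightarrow> d2 B (inv2 B a) = c2 B a"
  "a \<in> Arr2 B \<Longrightarrow> c2 B (inv2 B a) = d2 B a" using inv2_arr by blast+
lemma hc2T[simp]: "\<lbrakk>a \<in> Arr2 B; b \<in> Arr2 B; t1 B (d2 B a) = s1 B (d2 B b)\<rbrakk> \<Longrightarrow> hc2 B b a \<in> Arr2 B"
  "\<lbrakk>a \<in> Arr2 B; b \<in> Arr2 B; t1 B (d2 B a) = s1 B (d2 B b)\<rbrakk> \<Longrightarrow> d2 B (hc2 B b a) = hc1 B (d2 B b) (d2 B a)"
  "\<lbrakk>a \<in> Arr2 B; b \<in> Arr2 B; t1 B (d2 B a) = s1 B (d2 B b)\<rbrakk> \<Longrightarrow> c2 B (hc2 B b a) = hc1 B (c2 B b) (c2 B a)"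
  using hc2_arr by blast+
lemma st2T[simp]: "a \<in> Arr2 B \<Longrightarrow> st2 B a \<in> Arr2 B" "a \<in> Arr2 B \<Longrightarrow> d2 B (st2 B a) = st1 B (d2 B a)"
  "a \<in> Arr2 B \<Longrightarrow> c2 B (st2 B a) = st1 B (c2 B a)" using st2_arr by blast+
lemma aaT[simp]: "\<lbrakk>f \<in> Arr1 B; g \<in> Arr1 B; h \<in> Arr1 B; t1 B f = s1 B g; t1 B g = s1 B h\<rbrakk> \<Longrightarrow> aa B h g f \<in> Arr2 B"
  "\<lbrakk>f \<in> Arr1 B; g \<in> Arr1 B; h \<in> Arr1 B; t1 B f = s1 B g; t1 B g = s1 B h\<rbrakk> \<Longrightarrow> d2 B (aa B h g f) = hc1 B (hc1 B h g) f"
  "\<lbrakk>f \<in> Arr1 B; g \<in> Arr1 B; h \<in> Arr1 B; t1 B f = s1 B g; t1 B g = s1 B h\<rbrakk> \<Longrightarrow> c2 B (aa B h g f) = hc1 B h (hc1 B g f)"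
  using aa_arr by blast+
lemma llT[simp]: "f \<in> Arr1 B \<Longrightarrow> ll B f \<in> Arr2 B" "f \<in> Arr1 B \<Longrightarrow> d2 B (ll B f) = hc1 B (id1 B (t1 B f)) f"
  "f \<in> Arr1 B \<Longrightarrow> c2 B (ll B f) = f" using ll_arr by blast+
lemma rrT[simp]: "f \<in> Arr1 B \<Longrightarrow> rr B f \<in> Arr2 B" "f \<in> Arr1 B \<Longrightarrow> d2 B (rr B f) = hc1 B f (id1 B (s1 B f))"
  "f \<in> Arr1 B \<Longrightarrow> c2 B (rr B f) = f" using rr_arr by blast+
lemma eeT[simp]: "f \<in> Arr1 B \<Longrightarrow> ee B f \<in> Arr2 B" "f \<in> Arr1 B \<Longrightarrow> d2 B (ee B f) = hc1 B (st1 B f) f"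
  "f \<in> Arr1 B \<Longrightarrow> c2 B (ee B f) = id1 B (s1 B f)" using ee_arr by blast+
lemma iiT[simp]: "f \<in> Arr1 B \<Longrightarrow> ii B f \<in> Arr2 B" "f \<in> Arr1 B \<Longrightarrow> d2 B (ii B f) = id1 B (t1 B f)"
  "f \<in> Arr1 B \<Longrightarrow> c2 B (ii B f) = hc1 B f (st1 B f)" using ii_arr by blast+

lemma vc_idl'[simp]: "\<lbrakk>a \<in> Arr2 B; c2 B a = f\<rbrakk> \<Longrightarrow> vc B (id2 B f) a = a" using vc_idl by blast
lemma vc_idr'[simp]: "\<lbrakk>a \<in> Arr2 B; d2 B a = f\<rbrakk> \<Longrightarrow> vc B a (id2 B f) = a" using vc_idr by blast
lemma inv_l[simp]: "a \<in> Arr2 B \<Longrightarrow> vc B (inv2 B a) a = id2 B (d2 B a)" by (rule inv2_l)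
lemma inv_r[simp]: "a \<in> Arr2 B \<Longrightarrow> vc B a (inv2 B a) = id2 B (c2 B a)" by (rule inv2_r)
lemma hc2_id'[simp]: "\<lbrakk>f \<in> Arr1 B; g \<in> Arr1 B; t1 B f = s1 B g\<rbrakk> \<Longrightarrow> hc2 B (id2 B g) (id2 B f) = id2 B (hc1 B g f)"
  by (rule hc2_id)

lemma inv_cancel1[simp]: "\<lbrakk>a \<in> Arr2 B; b \<in> Arr2 B; c2 B a = d2 B b\<rbrakk> \<Longrightarrow> vc B (inv2 B b) (vc B b a) = a"
  by (simp add: vc_assoc)
lemma inv_cancel2[simp]: "\<lbrakk>a \<in> Arr2 B; b \<in> Arr2 B; c2 B b = c2 B a\<rbrakk> \<Longrightarrow> vc B a (vc B (inv2 B a) b) = b"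
  by (simp add: vc_assoc)
lemma inv_cancel3[simp]: "\<lbrakk>a \<in> Arr2 B; b \<in> Arr2 B; d2 B a = d2 B b\<rbrakk> \<Longrightarrow> vc B (vc B b (inv2 B a)) a = b"
  by (simp add: vc_assoc[symmetric])
lemma inv_cancel4[simp]: "\<lbrakk>a \<in> Arr2 B; b \<in> Arr2 B; d2 B b = c2 B a\<rbrakk> \<Longrightarrow> vc B (vc B b a) (inv2 B a) = b"
  by (simp add: vc_assoc[symmetric])

lemma inv_unique: assumes h: "a \<in> Arr2 B" "b \<in> Arr2 B" "c2 B a = d2 B b" "vc B b a = id2 B (d2 B a)"
  shows "b = inv2 B a"
proof -
  have "b = vc B (vc B b a) (inv2 B a)" using h(1-3) by simp
  also have "\<dots> = inv2 B a" using h by simp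
  finally show ?thesis .
qed

lemma inv_inv[simp]: "a \<in> Arr2 B \<Longrightarrow> inv2 B (inv2 B a) = a"
  by (metis inv2T inv_r inv_unique)

lemma inv_id[simp]: "f \<in> Arr1 B \<Longrightarrow> inv2 B (id2 B f) = id2 B f"
  by (metis id2T vc_idl' inv_unique)

lemma inv_vc: assumes h: "a \<in> Arr2 B" "b \<in> Arr2 B" "c2 B a = d2 B b"
  shows "inv2 B (vc B b a) = vc B (inv2 B a) (inv2 B b)"
proof -
  have "vc B (vc B (inv2 B a) (inv2 B b)) (vc B b a) = id2 B (d2 B (vc B b a))"
    using h by (simp add: vc_assoc)
  thus ?thesis using h by (intro inv_unique[symmetric]) auto
qed

lemma interchange: "\<lbrakk>a \<in> Arr2 B; a' \<in> Arr2 B; b \<in> Arr2 B; b' \<in> Arr2 B;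
        c2 B a = d2 B a'; c2 B b = d2 B b'; t1 B (d2 B a) = s1 B (d2 B b)\<rbrakk> \<Longrightarrow>
        vc B (hc2 B b' a') (hc2 B b a) = hc2 B (vc B b' b) (vc B a' a)"
  using hc2_interchange by simp

lemma inv_hc: "\<lbrakk>a \<in> Arr2 B; b \<in> Arr2 B; t1 B (d2 B a) = s1 B (d2 B b)\<rbrakk> \<Longrightarrow>
   inv2 B (hc2 B b a) = hc2 B (inv2 B b) (inv2 B a)"
  by (rule inv_unique[symmetric]) (auto simp: interchange)

end

fun flip :: "'b \<times> bool \<Rightarrow> 'b \<times> bool" where "flip (f,b) = (f, \<not> b)"
fun JL :: "('o,'b,'c) bigrp \<Rightarrow> 'b \<times> bool \<Rightarrow> 'b" where
  "JL B (f,True) = f" | "JL B (f,False) = st1 B f"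
fun ls :: "('o,'b,'c) bigrp \<Rightarrow> 'b \<times> bool \<Rightarrow> 'o" where
  "ls B (f,True) = s1 B f" | "ls B (f,False) = t1 B f"
fun lt :: "('o,'b,'c) bigrp \<Rightarrow> 'b \<times> bool \<Rightarrow> 'o" where
  "lt B (f,True) = t1 B f" | "lt B (f,False) = s1 B f"
fun pt :: "('o,'b,'c) bigrp \<Rightarrow> 'o \<Rightarrow> ('b \<times> bool) list \<Rightarrow> 'o" where
  "pt B A [] = A" | "pt B A (x#r) = lt B x"
fun P :: "('o,'b,'c) bigrp \<Rightarrow> 'o \<Rightarrow> ('b \<times> bool) list \<Rightarrow> 'b" where
  "P B A [] = id1 B A" | "P B A (x#r) = hc1 B (JL B x) (P B A r)"
fun push :: "'b \<times> bool \<Rightarrow> ('b \<times> bool) list \<Rightarrow> ('b \<times> bool) list" where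
  "push x [] = [x]" | "push x (y#r) = (if y = flip x then r else x#y#r)"
fun valid :: "('o,'b,'c) bigrp \<Rightarrow> 'o \<Rightarrow> ('b \<times> bool) list \<Rightarrow> bool" where
  "valid B A [] = (A \<in> Ob B)"
| "valid B A (x#r) = (fst x \<in> Arr1 B \<and> ls B x = pt B A r \<and> valid B A r \<and>
      (case r of [] \<Rightarrow> True | y#_ \<Rightarrow> y \<noteq> flip x))"

fun act :: "('o,'b) fw \<Rightarrow> ('b \<times> bool) list \<Rightarrow> ('b \<times> bool) list"
and actinv :: "('o,'b) fw \<Rightarrow> ('b \<times> bool) list \<Rightarrow> ('b \<times> bool) list" where
  "act (FE f) r = push (f,True) r"
| "act (FI X) r = r"
| "act (FC g f) r = act g (act f r)"
| "act (FS w) r = actinv w r"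
| "actinv (FE f) r = push (f,False) r"
| "actinv (FI X) r = r"
| "actinv (FC g f) r = actinv f (actinv g r)"
| "actinv (FS w) r = act w r"

lemma flip_flip[simp]: "flip (flip x) = x" by (cases x) auto
lemma flip_neq[simp]: "flip x \<noteq> x" "x \<noteq> flip x" by (cases x, auto)+
lemma fst_flip[simp]: "fst (flip x) = fst x" by (cases x) auto

context bigroupoid begin

lemma JLT[simp]: "fst x \<in> Arr1 B \<Longrightarrow> JL B x \<in> Arr1 B"
  "fst x \<in> Arr1 B \<Longrightarrow> s1 B (JL B x) = ls B x"
  "fst x \<in> Arr1 B \<Longrightarrow> t1 B (JL B x) = lt B x"
  by (cases x; cases "snd x"; auto)+

lemma ls_flip[simp]: "ls B (flip x) = lt B x" "lt B (flip x) = ls B x"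
  by (cases x; cases "snd x"; auto)+

lemma ltOb[simp]: "fst x \<in> Arr1 B \<Longrightarrow> lt B x \<in> Ob B" "fst x \<in> Arr1 B \<Longrightarrow> ls B x \<in> Ob B"
  by (cases x; cases "snd x"; auto)+

lemma valid_Ob: "valid B A r \<Longrightarrow> A \<in> Ob B"
  by (induction r) auto

lemma valid_pt_Ob[simp]: "valid B A r \<Longrightarrow> pt B A r \<in> Ob B"
  by (cases r) auto

lemma PT[simp]: "valid B A r \<Longrightarrow> P B A r \<in> Arr1 B"
  "valid B A r \<Longrightarrow> s1 B (P B A r) = A"
  "valid B A r \<Longrightarrow> t1 B (P B A r) = pt B A r"
  by (induction r) (auto simp: valid_Ob)

lemma push_valid:
  assumes "valid B A r" "fst x \<in> Arr1 B" "ls B x = pt B A r"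
  shows "valid B A (push x r) \<and> pt B A (push x r) = lt B x"
proof (cases r)
  case Nil then show ?thesis using assms by auto
next
  case (Cons y r')
  show ?thesis
  proof (cases "y = flip x")
    case True
    then have "pt B A r' = lt B x" using assms Cons by auto
    then show ?thesis using assms Cons True by auto
  qed (use assms Cons in auto)
qed

lemma push_flip:
  assumes "valid B A r" "fst x \<in> Arr1 B" "ls B x = pt B A r"
  shows "push (flip x) (push x r) = r"
proof (cases r)
  case Nil then show ?thesis by auto
next
  case (Cons y r')
  show ?thesis
  proof (cases "y = flip x")
    case True
    then show ?thesis using assms Cons by (cases r') auto
  qed (use assms Cons in auto)
qed

lemma J1T: "fwf B w \<Longrightarrow> J1 B w \<in> Arr1 B \<and> s1 B (J1 B w) = fsrc B w \<and> t1 B (J1 B w) = ftgt B w"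
  by (induction w) auto

lemma J1T'[simp]: "fwf B w \<Longrightarrow> J1 B w \<in> Arr1 B" "fwf B w \<Longrightarrow> s1 B (J1 B w) = fsrc B w"
  "fwf B w \<Longrightarrow> t1 B (J1 B w) = ftgt B w" using J1T by blast+

lemma act_props:
  "fwf B w \<Longrightarrow>
    (\<forall>r. valid B A r \<and> pt B A r = fsrc B w \<longrightarrow>
       valid B A (act w r) \<and> pt B A (act w r) = ftgt B w \<and> actinv w (act w r) = r) \<and>
    (\<forall>r. valid B A r \<and> pt B A r = ftgt B w \<longrightarrow>
       valid B A (actinv w r) \<and> pt B A (actinv w r) = fsrc B w \<and> act w (actinv w r) = r)"
proof (induction w)
  case (FE f)
  have 1: "push (f,False) (push (f,True) r) = r" if "valid B A r" "pt B A r = s1 B f" for r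
    using push_flip[of A r "(f,True)"] that FE by auto
  have 2: "push (f,True) (push (f,False) r) = r" if "valid B A r" "pt B A r = t1 B f" for r
    using push_flip[of A r "(f,False)"] that FE by auto
  show ?case using FE push_valid[of A _ "(f,True)"] push_valid[of A _ "(f,False)"] 1 2 by auto
next
  case (FC g f)
  then show ?case by auto
qed auto

end

definition cc :: "('o,'b,'c) bigrp \<Rightarrow> 'b \<times> bool \<Rightarrow> 'c" where
  "cc B x = (if snd x then inv2 B (ii B (fst x)) else ee B (fst x))"

fun C :: "('o,'b,'c) bigrp \<Rightarrow> 'o \<Rightarrow> 'b \<times> bool \<Rightarrow> ('b \<times> bool) list \<Rightarrow> 'c" where
  "C B A x [] = id2 B (hc1 B (JL B x) (id1 B A))"
| "C B A x (y#r) = (if y = flip x then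
     vc B (ll B (P B A r)) (vc B (hc2 B (cc B x) (id2 B (P B A r))) (inv2 B (aa B (JL B x) (JL B y) (P B A r))))
   else id2 B (hc1 B (JL B x) (P B A (y#r))))"

fun Phi :: "('o,'b,'c) bigrp \<Rightarrow> 'o \<Rightarrow> ('o,'b) fw \<Rightarrow> ('b \<times> bool) list \<Rightarrow> 'c" where
  "Phi B A (FE f) r = C B A (f,True) r"
| "Phi B A (FI X) r = ll B (P B A r)"
| "Phi B A (FC g f) r = vc B (Phi B A g (act f r))
     (vc B (hc2 B (id2 B (J1 B g)) (Phi B A f r)) (aa B (J1 B g) (J1 B f) (P B A r)))"
| "Phi B A (FS w) r = vc B (ll B (P B A (actinv w r)))
     (vc B (hc2 B (ee B (J1 B w)) (id2 B (P B A (actinv w r))))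
       (vc B (inv2 B (aa B (st1 B (J1 B w)) (J1 B w) (P B A (actinv w r))))
         (hc2 B (id2 B (st1 B (J1 B w))) (inv2 B (Phi B A w (actinv w r))))))"

context bigroupoid begin

lemma act_simps[simp]:
  "\<lbrakk>fwf B w; valid B A r; pt B A r = fsrc B w\<rbrakk> \<Longrightarrow> valid B A (act w r)"
  "\<lbrakk>fwf B w; valid B A r; pt B A r = fsrc B w\<rbrakk> \<Longrightarrow> pt B A (act w r) = ftgt B w"
  "\<lbrakk>fwf B w; valid B A r; pt B A r = fsrc B w\<rbrakk> \<Longrightarrow> actinv w (act w r) = r"
  "\<lbrakk>fwf B w; valid B A r; pt B A r = ftgt B w\<rbrakk> \<Longrightarrow> valid B A (actinv w r)"
  "\<lbrakk>fwf B w; valid B A r; pt B A r = ftgt B w\<rbrakk> \<Longrightarrow> pt B A (actinv w r) = fsrc B w"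
  "\<lbrakk>fwf B w; valid B A r; pt B A r = ftgt B w\<rbrakk> \<Longrightarrow> act w (actinv w r) = r"
  using act_props[of w A] by blast+

lemma ccT[simp]: "fst x \<in> Arr1 B \<Longrightarrow> cc B x \<in> Arr2 B"
  "fst x \<in> Arr1 B \<Longrightarrow> d2 B (cc B x) = hc1 B (JL B x) (JL B (flip x))"
  "fst x \<in> Arr1 B \<Longrightarrow> c2 B (cc B x) = id1 B (lt B x)"
  by (cases x; cases "snd x"; auto simp: cc_def)+

lemma CT: assumes "valid B A r" "fst x \<in> Arr1 B" "ls B x = pt B A r"
  shows "C B A x r \<in> Arr2 B \<and> d2 B (C B A x r) = hc1 B (JL B x) (P B A r) \<and>
         c2 B (C B A x r) = P B A (push x r)"
proof (cases r)
  case Nil then show ?thesis using assms by (auto simp: valid_Ob)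
next
  case (Cons y r')
  show ?thesis
  proof (cases "y = flip x")
    case True
    then have "pt B A r' = lt B x" "valid B A r'" using assms Cons by auto
    then show ?thesis using assms Cons True by auto
  qed (use assms Cons in auto)
qed

lemma PhiT: "\<lbrakk>fwf B w; valid B A r; pt B A r = fsrc B w\<rbrakk> \<Longrightarrow>
   Phi B A w r \<in> Arr2 B \<and> d2 B (Phi B A w r) = hc1 B (J1 B w) (P B A r) \<and>
   c2 B (Phi B A w r) = P B A (act w r)"
proof (induction w arbitrary: r)
  case (FE f)
  then show ?case using CT[of A r "(f,True)"] by auto
next
  case (FI X)
  then show ?case by auto
next
  case (FC g f)
  then show ?case by auto
next
  case (FS w)
  let ?q = "actinv w r"
  have q: "valid B A ?q" "pt B A ?q = fsrc B w" "act w ?q = r" using FS.prems by auto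
  have IH: "Phi B A w ?q \<in> Arr2 B" "d2 B (Phi B A w ?q) = hc1 B (J1 B w) (P B A ?q)"
     "c2 B (Phi B A w ?q) = P B A r" using FS.IH[of ?q] q FS.prems by auto
  show ?case using IH q FS.prems by auto
qed

lemma PhiT'[simp]:
  "\<lbrakk>fwf B w; valid B A r; pt B A r = fsrc B w\<rbrakk> \<Longrightarrow> Phi B A w r \<in> Arr2 B"
  "\<lbrakk>fwf B w; valid B A r; pt B A r = fsrc B w\<rbrakk> \<Longrightarrow> d2 B (Phi B A w r) = hc1 B (J1 B w) (P B A r)"
  "\<lbrakk>fwf B w; valid B A r; pt B A r = fsrc B w\<rbrakk> \<Longrightarrow> c2 B (Phi B A w r) = P B A (act w r)"
  using PhiT by blast+

end

context bigroupoid begin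

abbreviation V (infixr "\<odot>" 55) where "b \<odot> a \<equiv> vc B b a"
abbreviation H (infixr "\<star>" 60) where "b \<star> a \<equiv> hc2 B b a"
abbreviation H1 (infixr "\<bullet>" 60) where "g \<bullet> f \<equiv> hc1 B g f"
abbreviation I2 ("\<iota>") where "\<iota> f \<equiv> id2 B f"

lemma assoc_r: "\<lbrakk>a \<in> Arr2 B; b \<in> Arr2 B; c \<in> Arr2 B; c2 B a = d2 B b; c2 B b = d2 B c\<rbrakk> \<Longrightarrow>
  (c \<odot> b) \<odot> a = c \<odot> (b \<odot> a)" by (simp add: vc_assoc)

lemma ext2: "\<lbrakk>x \<odot> y = z; x \<in> Arr2 B; y \<in> Arr2 B; w \<in> Arr2 B; c2 B y = d2 B x; c2 B w = d2 B y\<rbrakk> \<Longrightarrow>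
  x \<odot> (y \<odot> w) = z \<odot> w" by (simp add: vc_assoc)

lemma ext3: "\<lbrakk>x \<odot> (y \<odot> z) = r; x \<in> Arr2 B; y \<in> Arr2 B; z \<in> Arr2 B; w \<in> Arr2 B;
   c2 B y = d2 B x; c2 B z = d2 B y; c2 B w = d2 B z\<rbrakk> \<Longrightarrow>
  x \<odot> (y \<odot> (z \<odot> w)) = r \<odot> w" by (simp add: vc_assoc)

lemma wdl: "\<lbrakk>g \<in> Arr1 B; a \<in> Arr2 B; b \<in> Arr2 B; c2 B a = d2 B b; t1 B (d2 B a) = s1 B g\<rbrakk> \<Longrightarrow>
   \<iota> g \<star> (b \<odot> a) = (\<iota> g \<star> b) \<odot> (\<iota> g \<star> a)"
  by (simp add: interchange)
lemma wdr: "\<lbrakk>f \<in> Arr1 B; a \<in> Arr2 B; b \<in> Arr2 B; c2 B a = d2 B b; t1 B f = s1 B (d2 B a)\<rbrakk> \<Longrightarrow>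
   (b \<odot> a) \<star> \<iota> f = (b \<star> \<iota> f) \<odot> (a \<star> \<iota> f)"
  by (simp add: interchange)

lemma sw1: "\<lbrakk>a \<in> Arr2 B; b \<in> Arr2 B; t1 B (d2 B a) = s1 B (d2 B b)\<rbrakk> \<Longrightarrow>
   (b \<star> \<iota> (c2 B a)) \<odot> (\<iota> (d2 B b) \<star> a) = b \<star> a"
  by (simp add: interchange)
lemma sw2: "\<lbrakk>a \<in> Arr2 B; b \<in> Arr2 B; t1 B (d2 B a) = s1 B (d2 B b)\<rbrakk> \<Longrightarrow>
   (\<iota> (c2 B b) \<star> a) \<odot> (b \<star> \<iota> (d2 B a)) = b \<star> a"
  by (simp add: interchange)

lemma anat: "\<lbrakk>a \<in> Arr2 B; b \<in> Arr2 B; c \<in> Arr2 B;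
        t1 B (d2 B a) = s1 B (d2 B b); t1 B (d2 B b) = s1 B (d2 B c)\<rbrakk> \<Longrightarrow>
   aa B (c2 B c) (c2 B b) (c2 B a) \<odot> ((c \<star> b) \<star> a) = (c \<star> (b \<star> a)) \<odot> aa B (d2 B c) (d2 B b) (d2 B a)"
  by (rule aa_nat)

lemma anat_inv: assumes h: "a \<in> Arr2 B" "b \<in> Arr2 B" "c \<in> Arr2 B"
        "t1 B (d2 B a) = s1 B (d2 B b)" "t1 B (d2 B b) = s1 B (d2 B c)"
  shows "inv2 B (aa B (c2 B c) (c2 B b) (c2 B a)) \<odot> (c \<star> (b \<star> a)) = ((c \<star> b) \<star> a) \<odot> inv2 B (aa B (d2 B c) (d2 B b) (d2 B a))"
proof -
  let ?A = "aa B (c2 B c) (c2 B b) (c2 B a)" and ?A' = "aa B (d2 B c) (d2 B b) (d2 B a)"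
  have e: "?A \<odot> ((c \<star> b) \<star> a) = (c \<star> (b \<star> a)) \<odot> ?A'" using anat h by blast
  have "inv2 B ?A \<odot> (c \<star> (b \<star> a)) = inv2 B ?A \<odot> (((c \<star> (b \<star> a)) \<odot> ?A') \<odot> inv2 B ?A')"
    using h by simp
  also have "\<dots> = inv2 B ?A \<odot> ((?A \<odot> ((c \<star> b) \<star> a)) \<odot> inv2 B ?A')" using e by simp
  also have "\<dots> = ((c \<star> b) \<star> a) \<odot> inv2 B ?A'" using h by (simp add: vc_assoc)
  finally show ?thesis .
qed

lemma lnat: "a \<in> Arr2 B \<Longrightarrow> ll B (c2 B a) \<odot> (\<iota> (id1 B (t1 B (d2 B a))) \<star> a) = a \<odot> ll B (d2 B a)"
  by (rule ll_nat)

lemma lwhisk_inj: assumes h: "a \<in> Arr2 B" "b \<in> Arr2 B" "d2 B a = d2 B b" "c2 B a = c2 B b"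
  "\<iota> (id1 B (t1 B (d2 B a))) \<star> a = \<iota> (id1 B (t1 B (d2 B a))) \<star> b"
  shows "a = b"
proof -
  have "a = (a \<odot> ll B (d2 B a)) \<odot> inv2 B (ll B (d2 B a))" using h(1) by simp
  also have "\<dots> = (ll B (c2 B a) \<odot> (\<iota> (id1 B (t1 B (d2 B a))) \<star> a)) \<odot> inv2 B (ll B (d2 B a))"
    using lnat[of a] h(1) by simp
  also have "\<dots> = (ll B (c2 B b) \<odot> (\<iota> (id1 B (t1 B (d2 B b))) \<star> b)) \<odot> inv2 B (ll B (d2 B b))"
    using h by simp
  also have "\<dots> = b" using lnat[of b] h(2) by simp
  finally show ?thesis .
qed

lemma iso_rcancel: assumes h: "a \<in> Arr2 B" "b \<in> Arr2 B" "k \<in> Arr2 B" "c2 B k = d2 B a" "c2 B k = d2 B b"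
   "a \<odot> k = b \<odot> k" shows "a = b"
proof -
  have "a = (a \<odot> k) \<odot> inv2 B k" using h(1-5) by simp
  also have "\<dots> = (b \<odot> k) \<odot> inv2 B k" using h by simp
  also have "\<dots> = b" using h by simp
  finally show ?thesis .
qed

end

context bigroupoid begin

lemma kelly: assumes F: "F \<in> Arr1 B" and X: "X \<in> Arr1 B" and FX: "t1 B X = s1 B F"
  shows "ll B (F \<bullet> X) \<odot> aa B (id1 B (t1 B F)) F X = ll B F \<star> \<iota> X"
proof -
  let ?u = "id1 B (t1 B F)"
  have u: "?u \<in> Arr1 B" "s1 B ?u = t1 B F" "t1 B ?u = t1 B F" using F by auto
  let ?K = "aa B ?u (?u \<bullet> F) X \<odot> (aa B ?u ?u F \<star> \<iota> X)"
  have p: "aa B ?u ?u (F \<bullet> X) \<odot> aa B (?u \<bullet> ?u) F X = (\<iota> ?u \<star> aa B ?u F X) \<odot> ?K"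
    using pentagon[of X F ?u ?u] F X FX by simp
  have t1: "(\<iota> ?u \<star> ll B (F \<bullet> X)) \<odot> aa B ?u ?u (F \<bullet> X) = rr B ?u \<star> \<iota> (F \<bullet> X)"
    using triangle[of "F \<bullet> X" ?u] F X FX by simp
  have t2: "(\<iota> ?u \<star> ll B F) \<odot> aa B ?u ?u F = rr B ?u \<star> \<iota> F"
    using triangle[of F ?u] F by simp
  have n1: "aa B ?u F X \<odot> ((rr B ?u \<star> \<iota> F) \<star> \<iota> X) = (rr B ?u \<star> (\<iota> F \<star> \<iota> X)) \<odot> aa B (?u \<bullet> ?u) F X"
    using anat[of "\<iota> X" "\<iota> F" "rr B ?u"] F X FX by simp
  have n2: "aa B ?u F X \<odot> ((\<iota> ?u \<star> ll B F) \<star> \<iota> X) = (\<iota> ?u \<star> (ll B F \<star> \<iota> X)) \<odot> aa B ?u (?u \<bullet> F) X"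
    using anat[of "\<iota> X" "ll B F" "\<iota> ?u"] F X FX by simp
  have L: "(\<iota> ?u \<star> (ll B (F \<bullet> X) \<odot> aa B ?u F X)) \<odot> ?K = aa B ?u F X \<odot> ((rr B ?u \<star> \<iota> F) \<star> \<iota> X)"
  proof -
    have "(\<iota> ?u \<star> (ll B (F \<bullet> X) \<odot> aa B ?u F X)) \<odot> ?K = (\<iota> ?u \<star> ll B (F \<bullet> X)) \<odot> ((\<iota> ?u \<star> aa B ?u F X) \<odot> ?K)"
      using F X FX by (simp add: wdl vc_assoc)
    also have "\<dots> = (\<iota> ?u \<star> ll B (F \<bullet> X)) \<odot> (aa B ?u ?u (F \<bullet> X) \<odot> aa B (?u \<bullet> ?u) F X)"
      using p by simp
    also have "\<dots> = (rr B ?u \<star> \<iota> (F \<bullet> X)) \<odot> aa B (?u \<bullet> ?u) F X"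
      using t1 F X FX by (simp add: vc_assoc)
    also have "\<dots> = aa B ?u F X \<odot> ((rr B ?u \<star> \<iota> F) \<star> \<iota> X)"
      using n1 F X FX by simp
    finally show ?thesis .
  qed
  have R: "(\<iota> ?u \<star> (ll B F \<star> \<iota> X)) \<odot> ?K = aa B ?u F X \<odot> ((rr B ?u \<star> \<iota> F) \<star> \<iota> X)"
  proof -
    have "(\<iota> ?u \<star> (ll B F \<star> \<iota> X)) \<odot> ?K = ((\<iota> ?u \<star> (ll B F \<star> \<iota> X)) \<odot> aa B ?u (?u \<bullet> F) X) \<odot> (aa B ?u ?u F \<star> \<iota> X)"
      using F X FX by (simp add: vc_assoc)
    also have "\<dots> = (aa B ?u F X \<odot> ((\<iota> ?u \<star> ll B F) \<star> \<iota> X)) \<odot> (aa B ?u ?u F \<star> \<iota> X)"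
      using n2 by simp
    also have "\<dots> = aa B ?u F X \<odot> (((\<iota> ?u \<star> ll B F) \<odot> aa B ?u ?u F) \<star> \<iota> X)"
      using F X FX by (simp add: wdr vc_assoc)
    also have "\<dots> = aa B ?u F X \<odot> ((rr B ?u \<star> \<iota> F) \<star> \<iota> X)"
      using t2 by simp
    finally show ?thesis .
  qed
  have eqK: "(\<iota> ?u \<star> (ll B (F \<bullet> X) \<odot> aa B ?u F X)) \<odot> ?K = (\<iota> ?u \<star> (ll B F \<star> \<iota> X)) \<odot> ?K"
    using L R by simp
  have "\<iota> ?u \<star> (ll B (F \<bullet> X) \<odot> aa B ?u F X) = \<iota> ?u \<star> (ll B F \<star> \<iota> X)"
    using eqK by (rule iso_rcancel[rotated 5]) (use F X FX in simp_all)
  moreover have "t1 B (d2 B (ll B (F \<bullet> X) \<odot> aa B ?u F X)) = t1 B F" using F X FX by simp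
  ultimately show ?thesis apply - apply (rule lwhisk_inj)
    using F X FX apply simp
    using F X FX apply simp
    using F X FX apply simp
    using F X FX apply simp
    apply (simp only:)
    done
qed

end

context bigroupoid begin

lemma zz: assumes F: "F \<in> Arr1 B" and X: "X \<in> Arr1 B" and FX: "t1 B X = s1 B F"
  shows "(\<iota> F \<star> ll B X) \<odot> ((\<iota> F \<star> (ee B F \<star> \<iota> X)) \<odot> ((\<iota> F \<star> inv2 B (aa B (st1 B F) F X)) \<odot>
     (aa B F (st1 B F) (F \<bullet> X) \<odot> (ii B F \<star> \<iota> (F \<bullet> X))))) = ll B (F \<bullet> X)"
proof -
  let ?S = "st1 B F" and ?u = "id1 B (t1 B F)" and ?u1 = "id1 B (s1 B F)"
  have p: "aa B F ?S (F \<bullet> X) \<odot> aa B (F \<bullet> ?S) F X = (\<iota> F \<star> aa B ?S F X) \<odot> (aa B F (?S \<bullet> F) X \<odot> (aa B F ?S F \<star> \<iota> X))"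
    using pentagon[of X F ?S F] F X FX by simp
  have a: "(\<iota> F \<star> inv2 B (aa B ?S F X)) \<odot> aa B F ?S (F \<bullet> X) = aa B F (?S \<bullet> F) X \<odot> ((aa B F ?S F \<star> \<iota> X) \<odot> inv2 B (aa B (F \<bullet> ?S) F X))"
  proof -
    have "(\<iota> F \<star> inv2 B (aa B ?S F X)) \<odot> aa B F ?S (F \<bullet> X) =
      (\<iota> F \<star> inv2 B (aa B ?S F X)) \<odot> ((aa B F ?S (F \<bullet> X) \<odot> aa B (F \<bullet> ?S) F X) \<odot> inv2 B (aa B (F \<bullet> ?S) F X))"
      using F X FX by simp
    also have "\<dots> = (\<iota> F \<star> inv2 B (aa B ?S F X)) \<odot> (((\<iota> F \<star> aa B ?S F X) \<odot> (aa B F (?S \<bullet> F) X \<odot> (aa B F ?S F \<star> \<iota> X))) \<odot> inv2 B (aa B (F \<bullet> ?S) F X))"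
      using p by simp
    also have "\<dots> = ((\<iota> F \<star> inv2 B (aa B ?S F X)) \<odot> (\<iota> F \<star> aa B ?S F X)) \<odot> (aa B F (?S \<bullet> F) X \<odot> ((aa B F ?S F \<star> \<iota> X) \<odot> inv2 B (aa B (F \<bullet> ?S) F X)))"
      using F X FX by (simp add: vc_assoc)
    also have "(\<iota> F \<star> inv2 B (aa B ?S F X)) \<odot> (\<iota> F \<star> aa B ?S F X) = \<iota> (F \<bullet> ((?S \<bullet> F) \<bullet> X))"
      using F X FX by (simp add: interchange)
    finally show ?thesis using F X FX by simp
  qed
  have b: "aa B F ?u1 X \<odot> ((\<iota> F \<star> ee B F) \<star> \<iota> X) = (\<iota> F \<star> (ee B F \<star> \<iota> X)) \<odot> aa B F (?S \<bullet> F) X"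
    using anat[of "\<iota> X" "ee B F" "\<iota> F"] F X FX by simp
  have c: "(\<iota> F \<star> ll B X) \<odot> aa B F ?u1 X = rr B F \<star> \<iota> X"
    using triangle[of X F] F X FX by simp
  have d: "inv2 B (aa B (F \<bullet> ?S) F X) \<odot> (ii B F \<star> \<iota> (F \<bullet> X)) = ((ii B F \<star> \<iota> F) \<star> \<iota> X) \<odot> inv2 B (aa B ?u F X)"
    using anat_inv[of "\<iota> X" "\<iota> F" "ii B F"] F X FX by simp
  have e: "rr B F \<odot> ((\<iota> F \<star> ee B F) \<odot> (aa B F ?S F \<odot> (ii B F \<star> \<iota> F))) = ll B F"
    using inverse_ax[of F] F by simp
  have f: "ll B (F \<bullet> X) \<odot> aa B ?u F X = ll B F \<star> \<iota> X"
    using kelly F X FX by simp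
  have "(\<iota> F \<star> ll B X) \<odot> ((\<iota> F \<star> (ee B F \<star> \<iota> X)) \<odot> ((\<iota> F \<star> inv2 B (aa B ?S F X)) \<odot>
     (aa B F ?S (F \<bullet> X) \<odot> (ii B F \<star> \<iota> (F \<bullet> X))))) =
     (\<iota> F \<star> ll B X) \<odot> ((\<iota> F \<star> (ee B F \<star> \<iota> X)) \<odot> (((\<iota> F \<star> inv2 B (aa B ?S F X)) \<odot>
     aa B F ?S (F \<bullet> X)) \<odot> (ii B F \<star> \<iota> (F \<bullet> X))))"
    using F X FX by (simp add: vc_assoc)
  also have "\<dots> = (\<iota> F \<star> ll B X) \<odot> ((\<iota> F \<star> (ee B F \<star> \<iota> X)) \<odot> ((aa B F (?S \<bullet> F) X \<odot> ((aa B F ?S F \<star> \<iota> X) \<odot> inv2 B (aa B (F \<bullet> ?S) F X))) \<odot> (ii B F \<star> \<iota> (F \<bullet> X))))"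
    using a by simp
  also have "\<dots> = (\<iota> F \<star> ll B X) \<odot> (((\<iota> F \<star> (ee B F \<star> \<iota> X)) \<odot> aa B F (?S \<bullet> F) X) \<odot> ((aa B F ?S F \<star> \<iota> X) \<odot> (inv2 B (aa B (F \<bullet> ?S) F X) \<odot> (ii B F \<star> \<iota> (F \<bullet> X)))))"
    using F X FX by (simp add: vc_assoc)
  also have "\<dots> = (\<iota> F \<star> ll B X) \<odot> ((aa B F ?u1 X \<odot> ((\<iota> F \<star> ee B F) \<star> \<iota> X)) \<odot> ((aa B F ?S F \<star> \<iota> X) \<odot> (((ii B F \<star> \<iota> F) \<star> \<iota> X) \<odot> inv2 B (aa B ?u F X))))"
    using b d by simp
  also have "\<dots> = ((\<iota> F \<star> ll B X) \<odot> aa B F ?u1 X) \<odot> (((\<iota> F \<star> ee B F) \<star> \<iota> X) \<odot> ((aa B F ?S F \<star> \<iota> X) \<odot> (((ii B F \<star> \<iota> F) \<star> \<iota> X) \<odot> inv2 B (aa B ?u F X))))"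
    using F X FX by (simp add: vc_assoc)
  also have "\<dots> = ((rr B F \<star> \<iota> X) \<odot> (((\<iota> F \<star> ee B F) \<star> \<iota> X) \<odot> ((aa B F ?S F \<star> \<iota> X) \<odot> ((ii B F \<star> \<iota> F) \<star> \<iota> X)))) \<odot> inv2 B (aa B ?u F X)"
    using c F X FX by (simp add: vc_assoc)
  also have "\<dots> = ((rr B F \<odot> ((\<iota> F \<star> ee B F) \<odot> (aa B F ?S F \<odot> (ii B F \<star> \<iota> F)))) \<star> \<iota> X) \<odot> inv2 B (aa B ?u F X)"
    using F X FX by (simp add: wdr)
  also have "\<dots> = (ll B F \<star> \<iota> X) \<odot> inv2 B (aa B ?u F X)"
    using e by simp
  also have "\<dots> = ll B (F \<bullet> X)"
    using f[symmetric] F X FX by simp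
  finally show ?thesis .
qed

end

context bigroupoid begin

lemma fwf_Ob[simp]: "fwf B w \<Longrightarrow> fsrc B w \<in> Ob B" "fwf B w \<Longrightarrow> ftgt B w \<in> Ob B"
  by (metis J1T' ob_s1, metis J1T' ob_t1)

lemma tw_props: "twf B a \<Longrightarrow> fwf B (tdom B a) \<and> fwf B (tcod B a) \<and>
   fsrc B (tdom B a) = fsrc B (tcod B a) \<and> ftgt B (tdom B a) = ftgt B (tcod B a)"
  by (induction a) auto

lemma tw_simps[simp]: "twf B a \<Longrightarrow> fwf B (tdom B a)" "twf B a \<Longrightarrow> fwf B (tcod B a)"
  "twf B a \<Longrightarrow> fsrc B (tcod B a) = fsrc B (tdom B a)"
  "twf B a \<Longrightarrow> ftgt B (tcod B a) = ftgt B (tdom B a)"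
  using tw_props by auto

lemma J2T: "twf B a \<Longrightarrow> J2 B a \<in> Arr2 B \<and> d2 B (J2 B a) = J1 B (tdom B a) \<and> c2 B (J2 B a) = J1 B (tcod B a)"
  by (induction a) auto

lemma J2T'[simp]: "twf B a \<Longrightarrow> J2 B a \<in> Arr2 B" "twf B a \<Longrightarrow> d2 B (J2 B a) = J1 B (tdom B a)"
  "twf B a \<Longrightarrow> c2 B (J2 B a) = J1 B (tcod B a)" using J2T by blast+

lemma act_inv_props: "twf B a \<Longrightarrow>
   (\<forall>r. valid B A r \<and> pt B A r = fsrc B (tdom B a) \<longrightarrow> act (tdom B a) r = act (tcod B a) r) \<and>
   (\<forall>r. valid B A r \<and> pt B A r = ftgt B (tdom B a) \<longrightarrow> actinv (tdom B a) r = actinv (tcod B a) r)"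
proof (induction a)
  case (TV b a)
  then show ?case by (metis tw_simps twf.simps(2) tdom.simps(2) tcod.simps(2))
next
  case (TH b a)
  then show ?case by auto
next
  case (TInv a)
  then show ?case by auto
next
  case (TS a)
  then show ?case by auto
qed auto

lemma act_eq[simp]: "\<lbrakk>twf B a; valid B A r; pt B A r = fsrc B (tdom B a)\<rbrakk> \<Longrightarrow> act (tcod B a) r = act (tdom B a) r"
  "\<lbrakk>twf B a; valid B A r; pt B A r = ftgt B (tdom B a)\<rbrakk> \<Longrightarrow> actinv (tcod B a) r = actinv (tdom B a) r"
  using act_inv_props[of a A] by auto

lemma sw3: "\<lbrakk>b \<in> Arr2 B; x \<in> Arr2 B; y \<in> Arr2 B; c2 B y = d2 B x; t1 B (d2 B y) = s1 B (d2 B b)\<rbrakk> \<Longrightarrow>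
  b \<star> (x \<odot> y) = (b \<star> x) \<odot> (\<iota> (d2 B b) \<star> y)"
  by (simp add: interchange)

end

context bigroupoid begin

lemma main: "twf B a \<Longrightarrow> valid B A r \<Longrightarrow> pt B A r = fsrc B (tdom B a) \<Longrightarrow>
  Phi B A (tcod B a) r \<odot> (J2 B a \<star> \<iota> (P B A r)) = Phi B A (tdom B a) r"
proof (induction a arbitrary: r)
  case (TId w)
  then show ?case by simp
next
  case (TV b a)
  have tw: "twf B b" "twf B a" "tcod B a = tdom B b" using TV.prems by auto
  have tw4: "fsrc B (tdom B b) = fsrc B (tdom B a)" using tw tw_simps(3)[of a] by simp
  let ?P = "P B A r"
  have "Phi B A (tcod B b) r \<odot> ((J2 B b \<odot> J2 B a) \<star> \<iota> ?P) =
        (Phi B A (tcod B b) r \<odot> (J2 B b \<star> \<iota> ?P)) \<odot> (J2 B a \<star> \<iota> ?P)"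
    using tw tw4 TV.prems by (simp add: wdr vc_assoc)
  also have "\<dots> = Phi B A (tdom B b) r \<odot> (J2 B a \<star> \<iota> ?P)"
    using TV.IH(1)[of r] tw tw4 TV.prems by simp
  also have "\<dots> = Phi B A (tdom B a) r"
    using TV.IH(2)[of r] tw tw4 TV.prems by simp
  finally show ?case by simp
next
  case (TInv a)
  have tw: "twf B a" using TInv.prems by auto
  let ?P = "P B A r"
  have "Phi B A (tdom B a) r \<odot> (inv2 B (J2 B a) \<star> \<iota> ?P) =
      (Phi B A (tcod B a) r \<odot> (J2 B a \<star> \<iota> ?P)) \<odot> (inv2 B (J2 B a) \<star> \<iota> ?P)"
    using TInv.IH[of r] tw TInv.prems by simp
  also have "\<dots> = Phi B A (tcod B a) r"
    using tw TInv.prems by (simp add: assoc_r interchange)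
  finally show ?case by simp
next
  case (TH b a)
  have tw: "twf B b" "twf B a" "ftgt B (tdom B a) = fsrc B (tdom B b)" using TH.prems by auto
  let ?P = "P B A r" and ?r' = "act (tdom B a) r"
  let ?Ja = "J2 B a" and ?Jb = "J2 B b"
  have r': "valid B A ?r'" "pt B A ?r' = fsrc B (tdom B b)" "act (tcod B a) r = ?r'"
    using tw TH.prems by auto
  have IHa: "Phi B A (tcod B a) r \<odot> (?Ja \<star> \<iota> ?P) = Phi B A (tdom B a) r"
    using TH.IH(2)[of r] tw TH.prems by simp
  have IHb: "Phi B A (tcod B b) ?r' \<odot> (?Jb \<star> \<iota> (P B A ?r')) = Phi B A (tdom B b) ?r'"
    using TH.IH(1)[of ?r'] tw r' by simp
  have n: "aa B (J1 B (tcod B b)) (J1 B (tcod B a)) ?P \<odot> ((?Jb \<star> ?Ja) \<star> \<iota> ?P) =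
     (?Jb \<star> (?Ja \<star> \<iota> ?P)) \<odot> aa B (J1 B (tdom B b)) (J1 B (tdom B a)) ?P"
    using anat[of "\<iota> ?P" ?Ja ?Jb] tw TH.prems by simp
  have i: "(\<iota> (J1 B (tcod B b)) \<star> Phi B A (tcod B a) r) \<odot> (?Jb \<star> (?Ja \<star> \<iota> ?P)) =
      (?Jb \<star> \<iota> (P B A ?r')) \<odot> (\<iota> (J1 B (tdom B b)) \<star> Phi B A (tdom B a) r)"
    using IHa tw TH.prems by (simp add: interchange)
  have "Phi B A (FC (tcod B b) (tcod B a)) r \<odot> ((?Jb \<star> ?Ja) \<star> \<iota> ?P) =
     Phi B A (tcod B b) ?r' \<odot> ((\<iota> (J1 B (tcod B b)) \<star> Phi B A (tcod B a) r) \<odot>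
       (aa B (J1 B (tcod B b)) (J1 B (tcod B a)) ?P \<odot> ((?Jb \<star> ?Ja) \<star> \<iota> ?P)))"
    using tw TH.prems r' by (simp add: assoc_r)
  also have "\<dots> = Phi B A (tcod B b) ?r' \<odot> (((\<iota> (J1 B (tcod B b)) \<star> Phi B A (tcod B a) r) \<odot>
       (?Jb \<star> (?Ja \<star> \<iota> ?P))) \<odot> aa B (J1 B (tdom B b)) (J1 B (tdom B a)) ?P)"
    using n tw TH.prems r' by (simp add: vc_assoc)
  also have "\<dots> = (Phi B A (tcod B b) ?r' \<odot> (?Jb \<star> \<iota> (P B A ?r'))) \<odot> ((\<iota> (J1 B (tdom B b)) \<star> Phi B A (tdom B a) r)
       \<odot> aa B (J1 B (tdom B b)) (J1 B (tdom B a)) ?P)"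
    using i tw TH.prems r' by (simp add: vc_assoc)
  also have "\<dots> = Phi B A (FC (tdom B b) (tdom B a)) r"
    using IHb by simp
  finally show ?case by simp
next
  case (TS a)
  have tw: "twf B a" using TS.prems by auto
  let ?q = "actinv (tdom B a) r"
  have q: "valid B A ?q" "pt B A ?q = fsrc B (tdom B a)" "act (tdom B a) ?q = r"
    "actinv (tcod B a) r = ?q" using tw TS.prems by auto
  have q5: "act (tcod B a) ?q = r" using act_eq(1)[of a A ?q] tw q(1,2,3) by simp
  let ?F = "Phi B A (tdom B a) ?q" and ?F' = "Phi B A (tcod B a) ?q" and ?Ja = "J2 B a"
  let ?Pq = "P B A ?q" and ?Pr = "P B A r"
  let ?J = "J1 B (tdom B a)" and ?J' = "J1 B (tcod B a)"
  have IH: "?F' \<odot> (?Ja \<star> \<iota> ?Pq) = ?F" using TS.IH[of ?q] tw q by simp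
  have invF: "inv2 B ?F' = (?Ja \<star> \<iota> ?Pq) \<odot> inv2 B ?F"
  proof -
    have "inv2 B ?F = inv2 B (?F' \<odot> (?Ja \<star> \<iota> ?Pq))" using IH by simp
    also have "\<dots> = inv2 B (?Ja \<star> \<iota> ?Pq) \<odot> inv2 B ?F'" using tw q by (simp add: inv_vc)
    finally have "(?Ja \<star> \<iota> ?Pq) \<odot> inv2 B ?F = (?Ja \<star> \<iota> ?Pq) \<odot> (inv2 B (?Ja \<star> \<iota> ?Pq) \<odot> inv2 B ?F')"
      by simp
    also have "\<dots> = inv2 B ?F'" using tw q by simp
    finally show ?thesis by simp
  qed
  have s1: "(\<iota> (st1 B ?J') \<star> inv2 B ?F') \<odot> (st2 B ?Ja \<star> \<iota> ?Pr) =
     (st2 B ?Ja \<star> (?Ja \<star> \<iota> ?Pq)) \<odot> (\<iota> (st1 B ?J) \<star> inv2 B ?F)"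
    unfolding invF using tw q q5 TS.prems by (simp add: interchange)
  have s2: "inv2 B (aa B (st1 B ?J') ?J' ?Pq) \<odot> (st2 B ?Ja \<star> (?Ja \<star> \<iota> ?Pq)) =
     ((st2 B ?Ja \<star> ?Ja) \<star> \<iota> ?Pq) \<odot> inv2 B (aa B (st1 B ?J) ?J ?Pq)"
    using anat_inv[of "\<iota> ?Pq" ?Ja "st2 B ?Ja"] tw q by simp
  have s3: "(ee B ?J' \<star> \<iota> ?Pq) \<odot> ((st2 B ?Ja \<star> ?Ja) \<star> \<iota> ?Pq) = ee B ?J \<star> \<iota> ?Pq"
    using ee_nat[of ?Ja] tw q by (simp add: interchange)
  have "inv2 B ?F' \<in> Arr2 B" "c2 B (inv2 B ?F') = ?J' \<bullet> ?Pq" "d2 B (inv2 B ?F') = ?Pr" using tw q q5 TS.prems by simp_all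
  have "Phi B A (FS (tcod B a)) r \<in> Arr2 B" using tw q q5 TS.prems by simp
  have "d2 B (Phi B A (FS (tcod B a)) r) = st1 B ?J' \<bullet> ?Pr" using tw q q5 TS.prems by simp
  have "Phi B A (FS (tcod B a)) r \<odot> (st2 B ?Ja \<star> \<iota> ?Pr) =
     ll B ?Pq \<odot> ((ee B ?J' \<star> \<iota> ?Pq) \<odot> (inv2 B (aa B (st1 B ?J') ?J' ?Pq) \<odot>
        ((\<iota> (st1 B ?J') \<star> inv2 B ?F') \<odot> (st2 B ?Ja \<star> \<iota> ?Pr))))"
    using tw q q5 TS.prems by (simp add: assoc_r)
  also have "\<dots> = ll B ?Pq \<odot> ((ee B ?J' \<star> \<iota> ?Pq) \<odot> ((inv2 B (aa B (st1 B ?J') ?J' ?Pq) \<odot>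
        (st2 B ?Ja \<star> (?Ja \<star> \<iota> ?Pq))) \<odot> (\<iota> (st1 B ?J) \<star> inv2 B ?F)))"
    unfolding s1 using tw q q5 TS.prems by (simp add: vc_assoc)
  also have "\<dots> = ll B ?Pq \<odot> (((ee B ?J' \<star> \<iota> ?Pq) \<odot> ((st2 B ?Ja \<star> ?Ja) \<star> \<iota> ?Pq)) \<odot>
       (inv2 B (aa B (st1 B ?J) ?J ?Pq) \<odot> (\<iota> (st1 B ?J) \<star> inv2 B ?F)))"
    unfolding s2 using tw q q5 TS.prems by (simp add: vc_assoc)
  also have "\<dots> = Phi B A (FS (tdom B a)) r"
    unfolding s3 using tw q q5 TS.prems by simp
  finally show ?case by simp
next
  case (TA h g f)
  have w: "fwf B h" "fwf B g" "fwf B f" "ftgt B f = fsrc B g" "ftgt B g = fsrc B h"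
    "pt B A r = fsrc B f" "valid B A r" using TA.prems by auto
  let ?rf = "act f r" let ?rfg = "act g ?rf"
  have rr': "valid B A ?rf" "pt B A ?rf = fsrc B g" "valid B A ?rfg" "pt B A ?rfg = fsrc B h"
    using w by auto
  let ?P = "P B A r" and ?Pf = "P B A ?rf"
  let ?Jh = "J1 B h" and ?Jg = "J1 B g" and ?Jf = "J1 B f"
  let ?Fh = "Phi B A h ?rfg" and ?Fg = "Phi B A g ?rf" and ?Ff = "Phi B A f r"
  have pent: "(\<iota> ?Jh \<star> aa B ?Jg ?Jf ?P) \<odot> (aa B ?Jh (?Jg \<bullet> ?Jf) ?P \<odot> (aa B ?Jh ?Jg ?Jf \<star> \<iota> ?P)) =
      aa B ?Jh ?Jg (?Jf \<bullet> ?P) \<odot> aa B (?Jh \<bullet> ?Jg) ?Jf ?P"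
    using pentagon[of ?P ?Jf ?Jg ?Jh] w by simp
  have n: "(\<iota> ?Jh \<star> (\<iota> ?Jg \<star> ?Ff)) \<odot> aa B ?Jh ?Jg (?Jf \<bullet> ?P) = aa B ?Jh ?Jg ?Pf \<odot> (\<iota> (?Jh \<bullet> ?Jg) \<star> ?Ff)"
    using anat[of ?Ff "\<iota> ?Jg" "\<iota> ?Jh"] w by simp
  have "Phi B A (FC h (FC g f)) r \<odot> (aa B ?Jh ?Jg ?Jf \<star> \<iota> ?P) =
     ?Fh \<odot> ((\<iota> ?Jh \<star> ?Fg) \<odot> ((\<iota> ?Jh \<star> (\<iota> ?Jg \<star> ?Ff)) \<odot> ((\<iota> ?Jh \<star> aa B ?Jg ?Jf ?P) \<odot>
       (aa B ?Jh (?Jg \<bullet> ?Jf) ?P \<odot> (aa B ?Jh ?Jg ?Jf \<star> \<iota> ?P)))))"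
    using w rr' by (simp add: wdl assoc_r)
  also have "\<dots> = ?Fh \<odot> ((\<iota> ?Jh \<star> ?Fg) \<odot> ((\<iota> ?Jh \<star> (\<iota> ?Jg \<star> ?Ff)) \<odot> (aa B ?Jh ?Jg (?Jf \<bullet> ?P) \<odot> aa B (?Jh \<bullet> ?Jg) ?Jf ?P)))"
    using pent by simp
  also have "\<dots> = ?Fh \<odot> ((\<iota> ?Jh \<star> ?Fg) \<odot> (((\<iota> ?Jh \<star> (\<iota> ?Jg \<star> ?Ff)) \<odot> aa B ?Jh ?Jg (?Jf \<bullet> ?P)) \<odot> aa B (?Jh \<bullet> ?Jg) ?Jf ?P))"
    using w rr' by (simp add: vc_assoc)
  also have "\<dots> = ?Fh \<odot> ((\<iota> ?Jh \<star> ?Fg) \<odot> ((aa B ?Jh ?Jg ?Pf \<odot> (\<iota> (?Jh \<bullet> ?Jg) \<star> ?Ff)) \<odot> aa B (?Jh \<bullet> ?Jg) ?Jf ?P))"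
    using n by simp
  also have "\<dots> = Phi B A (FC (FC h g) f) r"
    using w rr' by (simp add: vc_assoc)
  finally show ?case by simp
next
  case (TL f)
  have w: "fwf B f" "pt B A r = fsrc B f" "valid B A r" using TL.prems by auto
  let ?P = "P B A r" and ?Jf = "J1 B f" and ?F = "Phi B A f r" and ?u = "id1 B (ftgt B f)"
  have l: "ll B (P B A (act f r)) \<odot> (\<iota> ?u \<star> ?F) = ?F \<odot> ll B (?Jf \<bullet> ?P)"
    using lnat[of ?F] w by simp
  have k: "ll B (?Jf \<bullet> ?P) \<odot> aa B ?u ?Jf ?P = ll B ?Jf \<star> \<iota> ?P"
    using kelly[of ?Jf ?P] w by simp
  have "Phi B A (FC (FI (ftgt B f)) f) r = (ll B (P B A (act f r)) \<odot> (\<iota> ?u \<star> ?F)) \<odot> aa B ?u ?Jf ?P"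
    using w by (simp add: vc_assoc)
  also have "\<dots> = (?F \<odot> ll B (?Jf \<bullet> ?P)) \<odot> aa B ?u ?Jf ?P" using l by simp
  also have "\<dots> = ?F \<odot> (ll B ?Jf \<star> \<iota> ?P)" using k w by (simp add: assoc_r)
  finally show ?case by simp
next
  case (TR f)
  have w: "fwf B f" "pt B A r = fsrc B f" "valid B A r" using TR.prems by auto
  show ?case using triangle[of "P B A r" "J1 B f"] w by simp
next
  case (TE f)
  have w: "fwf B f" "pt B A r = fsrc B f" "valid B A r" using TE.prems by auto
  let ?P = "P B A r" and ?Jf = "J1 B f" and ?F = "Phi B A f r" and ?S = "st1 B (J1 B f)"
  have c: "(\<iota> ?S \<star> inv2 B ?F) \<odot> (\<iota> ?S \<star> ?F) = \<iota> (?S \<bullet> (?Jf \<bullet> ?P))"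
    using w by (simp add: interchange)
  have "Phi B A (FC (FS f) f) r = ll B ?P \<odot> ((ee B ?Jf \<star> \<iota> ?P) \<odot> (inv2 B (aa B ?S ?Jf ?P) \<odot>
      (((\<iota> ?S \<star> inv2 B ?F) \<odot> (\<iota> ?S \<star> ?F)) \<odot> aa B ?S ?Jf ?P)))"
    using w by (simp add: assoc_r)
  also have "\<dots> = ll B ?P \<odot> (ee B ?Jf \<star> \<iota> ?P)"
    unfolding c using w by simp
  finally show ?case by simp
next
  case (TIo f)
  have w: "fwf B f" "pt B A r = ftgt B f" "valid B A r" using TIo.prems by auto
  let ?q = "actinv f r"
  have q: "valid B A ?q" "pt B A ?q = fsrc B f" "act f ?q = r" using w by auto
  let ?X = "P B A ?q" and ?Pr = "P B A r" and ?F = "J1 B f" and ?S = "st1 B (J1 B f)"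
  let ?psi = "Phi B A f ?q" and ?u = "id1 B (ftgt B f)"
  have Z: "(\<iota> ?F \<star> ll B ?X) \<odot> ((\<iota> ?F \<star> (ee B ?F \<star> \<iota> ?X)) \<odot> ((\<iota> ?F \<star> inv2 B (aa B ?S ?F ?X)) \<odot>
     (aa B ?F ?S (?F \<bullet> ?X) \<odot> (ii B ?F \<star> \<iota> (?F \<bullet> ?X))))) = ll B (?F \<bullet> ?X)"
    using zz[of ?F ?X] w q by simp
  have n: "(\<iota> ?F \<star> (\<iota> ?S \<star> inv2 B ?psi)) \<odot> aa B ?F ?S ?Pr = aa B ?F ?S (?F \<bullet> ?X) \<odot> (\<iota> (?F \<bullet> ?S) \<star> inv2 B ?psi)"
    using anat[of "inv2 B ?psi" "\<iota> ?S" "\<iota> ?F"] w q by simp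
  have s: "(\<iota> (?F \<bullet> ?S) \<star> inv2 B ?psi) \<odot> (ii B ?F \<star> \<iota> ?Pr) = (ii B ?F \<star> \<iota> (?F \<bullet> ?X)) \<odot> (\<iota> ?u \<star> inv2 B ?psi)"
    using w q by (simp add: interchange)
  have l: "ll B ?Pr \<odot> (\<iota> ?u \<star> ?psi) = ?psi \<odot> ll B (?F \<bullet> ?X)"
    using lnat[of ?psi] w q by simp
  have "Phi B A (FC f (FS f)) r \<odot> (ii B ?F \<star> \<iota> ?Pr) =
     ?psi \<odot> ((\<iota> ?F \<star> ll B ?X) \<odot> ((\<iota> ?F \<star> (ee B ?F \<star> \<iota> ?X)) \<odot> ((\<iota> ?F \<star> inv2 B (aa B ?S ?F ?X)) \<odot>
       (((\<iota> ?F \<star> (\<iota> ?S \<star> inv2 B ?psi)) \<odot> aa B ?F ?S ?Pr) \<odot> (ii B ?F \<star> \<iota> ?Pr)))))"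
    using w q by (simp add: wdl assoc_r)
  also have "\<dots> = ?psi \<odot> ((\<iota> ?F \<star> ll B ?X) \<odot> ((\<iota> ?F \<star> (ee B ?F \<star> \<iota> ?X)) \<odot> ((\<iota> ?F \<star> inv2 B (aa B ?S ?F ?X)) \<odot>
       (aa B ?F ?S (?F \<bullet> ?X) \<odot> ((\<iota> (?F \<bullet> ?S) \<star> inv2 B ?psi) \<odot> (ii B ?F \<star> \<iota> ?Pr))))))"
    unfolding n using w q by (simp add: assoc_r)
  also have "\<dots> = ?psi \<odot> (((\<iota> ?F \<star> ll B ?X) \<odot> ((\<iota> ?F \<star> (ee B ?F \<star> \<iota> ?X)) \<odot> ((\<iota> ?F \<star> inv2 B (aa B ?S ?F ?X)) \<odot>
       (aa B ?F ?S (?F \<bullet> ?X) \<odot> (ii B ?F \<star> \<iota> (?F \<bullet> ?X)))))) \<odot> (\<iota> ?u \<star> inv2 B ?psi))"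
    unfolding s using w q by (simp add: vc_assoc)
  also have "\<dots> = (?psi \<odot> ll B (?F \<bullet> ?X)) \<odot> (\<iota> ?u \<star> inv2 B ?psi)"
    unfolding Z using w q by (simp add: vc_assoc)
  also have "\<dots> = (ll B ?Pr \<odot> (\<iota> ?u \<star> ?psi)) \<odot> (\<iota> ?u \<star> inv2 B ?psi)"
    using l by simp
  also have "\<dots> = ll B ?Pr"
    using w q by (simp add: assoc_r interchange)
  finally show ?case by simp
qed

end

context bigroupoid begin

lemma lcancel: assumes h: "a \<in> Arr2 B" "b \<in> Arr2 B" "k \<in> Arr2 B" "d2 B k = c2 B a" "d2 B k = c2 B b"
   "k \<odot> a = k \<odot> b" shows "a = b"
proof -
  have "a = inv2 B k \<odot> (k \<odot> a)" using h(1-5) by simp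
  also have "\<dots> = inv2 B k \<odot> (k \<odot> b)" using h by simp
  also have "\<dots> = b" using h(1-5) by simp
  finally show ?thesis .
qed

lemma rwhisk_inj: assumes h: "a \<in> Arr2 B" "b \<in> Arr2 B" "d2 B a = d2 B b" "c2 B a = c2 B b"
  "a \<star> \<iota> (id1 B (s1 B (d2 B a))) = b \<star> \<iota> (id1 B (s1 B (d2 B a)))"
  shows "a = b"
proof -
  have "a = (rr B (c2 B a) \<odot> (a \<star> \<iota> (id1 B (s1 B (d2 B a))))) \<odot> inv2 B (rr B (d2 B a))"
    using rr_nat[of a] h(1) by simp
  also have "\<dots> = (rr B (c2 B b) \<odot> (b \<star> \<iota> (id1 B (s1 B (d2 B b))))) \<odot> inv2 B (rr B (d2 B b))"
    using h by simp
  also have "\<dots> = b" using rr_nat[of b] h(2) by simp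
  finally show ?thesis .
qed

lemma coherence: assumes "twf B a" "twf B b" "tdom B a = tdom B b" "tcod B a = tcod B b"
  shows "J2 B a = J2 B b"
proof -
  let ?A = "fsrc B (tdom B a)"
  have v: "valid B ?A []" "pt B ?A [] = ?A" using assms by auto
  have ma: "Phi B ?A (tcod B a) [] \<odot> (J2 B a \<star> \<iota> (id1 B ?A)) = Phi B ?A (tdom B a) []"
    using main[of a ?A "[]"] assms v by simp
  have mb: "Phi B ?A (tcod B a) [] \<odot> (J2 B b \<star> \<iota> (id1 B ?A)) = Phi B ?A (tdom B a) []"
    using main[of b ?A "[]"] assms v by simp
  have eq: "Phi B ?A (tcod B a) [] \<odot> (J2 B a \<star> \<iota> (id1 B ?A)) = Phi B ?A (tcod B a) [] \<odot> (J2 B b \<star> \<iota> (id1 B ?A))"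
    using ma mb by simp
  have t: "J2 B a \<star> \<iota> (id1 B ?A) \<in> Arr2 B" "J2 B b \<star> \<iota> (id1 B ?A) \<in> Arr2 B"
    "Phi B ?A (tcod B a) [] \<in> Arr2 B"
    "d2 B (Phi B ?A (tcod B a) []) = c2 B (J2 B a \<star> \<iota> (id1 B ?A))"
    "d2 B (Phi B ?A (tcod B a) []) = c2 B (J2 B b \<star> \<iota> (id1 B ?A))"
    using assms v by simp_all
  have e2: "J2 B a \<star> \<iota> (id1 B ?A) = J2 B b \<star> \<iota> (id1 B ?A)"
    using lcancel[OF t eq] .
  have t2: "J2 B a \<in> Arr2 B" "J2 B b \<in> Arr2 B" "d2 B (J2 B a) = d2 B (J2 B b)" "c2 B (J2 B a) = c2 B (J2 B b)"
     "s1 B (d2 B (J2 B a)) = ?A"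
    using assms by simp_all
  show ?thesis using rwhisk_inj[OF t2(1-4)] e2 t2(5) by simp
qed

end

theorem theoremB11:
  fixes B :: "('o, 'b, 'c) bigrp" and \<alpha> \<beta> :: "('o, 'b) ft"
  assumes "bigroupoid B"
    and "twf B \<alpha>" and "twf B \<beta>"
    and "tdom B \<alpha> = tdom B \<beta>" and "tcod B \<alpha> = tcod B \<beta>"
  shows "J2 B \<alpha> = J2 B \<beta>"
  using bigroupoid.coherence[OF assms(1)] assms(2-5) by blast


end
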